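(* Let $C$ be an arbitrary quasi-copula and let $C^\sigma$ denote either of its reflections $C^\sigma(x,y)=y-C(1-x,y)$ or $C^\sigma(x,y)=x-C(x,1-y)$ (the same choice of reflection used throughout). Then $(C^\sigma)_M=(C_O)^\sigma$ and $(C^\sigma)_O=(C_M)^\sigma$.
   Context: For a quasi-copula $Q$ on $[0,1]^2$ and $\mathbf{x}=(x_1,x_2)\in[0,1]^2$ define the sets of (possibly degenerate) rectangles $[s_1,s_2]\times[t_1,t_2]\subseteq[0,1]^2$: $\mathcal{R}_\nearrow(\mathbf{x})$ those with southwest corner $\mathbf{x}$; $\mathcal{R}_\swarrow(\mathbf{x})$ those with northeast corner $\mathbf{x}$; $\mathcal{R}_\nwarrow(\mathbf{x})$ those with southeast corner $\mathbf{x}$; $\mathcal{R}_\searrow(\mathbf{x})$ those with northwest corner $\mathbf{x}$. With $V_Q([s_1,s_2]\times[t_1,t_2])=Q(s_1,t_1)+Q(s_2,t_2)-Q(s_2,t_1)-Q(s_1,t_2)$, the defects are $D^Q_{\bullet}(\mathbf{x})=\inf\{V_Q(R):R\in\mathcal{R}_\bullet(\mathbf{x})\}\le0$ for $\bullet\in\{\nearrow,\swarrow,\nwarrow,\searrow\}$, $D^Q_M=\min(D^Q_\nearrow,D^Q_\swarrow)$, $D^Q_O=\min(D^Q_\nwarrow,D^Q_\searrow)$, and $Q_M=Q-D^Q_M$, $Q_O=Q+D^Q_O$ (these are quasi-copulas with $Q_O\le Q\le Q_M$). A quasi-copula is a function $[0,1]^2\to\mathbb{R}$ that is grounded ($Q(x,0)=Q(0,y)=0$),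 has neutral element 1 ($Q(x,1)=x$, $Q(1,y)=y$), and has $V_Q(R)\ge0$ for every rectangle $R\subseteq[0,1]^2$ having a side on the boundary of $[0,1]^2$. *)

theory Defs
  imports Complex_Main
begin

text \<open>Bivariate functions on [0,1]^2 are represented as real \<Rightarrow> real \<Rightarrow> real;
  only their values on [0,1]^2 matter.\<close>

type_synonym bivar = "real \<Rightarrow> real \<Rightarrow> real"

definition vol :: "bivar \<Rightarrow> real \<Rightarrow> real \<Rightarrow> real \<Rightarrow> real \<Rightarrow> real" where
  "vol Q s1 s2 t1 t2 = Q s1 t1 + Q s2 t2 - Q s2 t1 - Q s1 t2"

definition quasi_copula :: "bivar \<Rightarrow> bool" where
  "quasi_copula Q \<longleftrightarrow>
     (\<forall>x\<in>{0..1}. Q x 0 = 0 \<and> Q 0 x = 0) \<and>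
     (\<forall>x\<in>{0..1}. Q x 1 = x \<and> Q 1 x = x) \<and>
     (\<forall>s1 s2 t1 t2. 0 \<le> s1 \<and> s1 \<le> s2 \<and> s2 \<le> 1 \<and> 0 \<le> t1 \<and> t1 \<le> t2 \<and> t2 \<le> 1 \<and>
        (s1 = 0 \<or> s2 = 1 \<or> t1 = 0 \<or> t2 = 1) \<longrightarrow> vol Q s1 s2 t1 t2 \<ge> 0)"

definition D_NE :: "bivar \<Rightarrow> real \<Rightarrow> real \<Rightarrow> real" where
  "D_NE Q x y = Inf {vol Q x s2 y t2 | s2 t2. x \<le> s2 \<and> s2 \<le> 1 \<and> y \<le> t2 \<and> t2 \<le> 1}"

definition D_SW :: "bivar \<Rightarrow> real \<Rightarrow> real \<Rightarrow> real" where
  "D_SW Q x y = Inf {vol Q s1 x t1 y | s1 t1. 0 \<le> s1 \<and> s1 \<le> x \<and> 0 \<le> t1 \<and> t1 \<le> y}"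

definition D_NW :: "bivar \<Rightarrow> real \<Rightarrow> real \<Rightarrow> real" where
  "D_NW Q x y = Inf {vol Q s1 x y t2 | s1 t2. 0 \<le> s1 \<and> s1 \<le> x \<and> y \<le> t2 \<and> t2 \<le> 1}"

definition D_SE :: "bivar \<Rightarrow> real \<Rightarrow> real \<Rightarrow> real" where
  "D_SE Q x y = Inf {vol Q x s2 t1 y | s2 t1. x \<le> s2 \<and> s2 \<le> 1 \<and> 0 \<le> t1 \<and> t1 \<le> y}"

definition D_M :: "bivar \<Rightarrow> real \<Rightarrow> real \<Rightarrow> real" where
  "D_M Q x y = min (D_NE Q x y) (D_SW Q x y)"

definition D_O :: "bivar \<Rightarrow> real \<Rightarrow> real \<Rightarrow> real" where
  "D_O Q x y = min (D_NW Q x y) (D_SE Q x y)"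

definition Q_M :: "bivar \<Rightarrow> bivar" where
  "Q_M Q = (\<lambda>x y. Q x y - D_M Q x y)"

definition Q_O :: "bivar \<Rightarrow> bivar" where
  "Q_O Q = (\<lambda>x y. Q x y + D_O Q x y)"

definition refl1 :: "bivar \<Rightarrow> bivar" where
  "refl1 C = (\<lambda>x y. y - C (1 - x) y)"

definition refl2 :: "bivar \<Rightarrow> bivar" where
  "refl2 C = (\<lambda>x y. x - C x (1 - y))"

end

theory Submission
  imports Defs
begin

lemma vol_r1: "vol (refl1 C) s1 s2 t1 t2 = vol C (1-s2) (1-s1) t1 t2"
  by (simp add: vol_def refl1_def)

lemma vol_r2: "vol (refl2 C) s1 s2 t1 t2 = vol C s1 s2 (1-t2) (1-t1)"
  by (simp add: vol_def refl2_def)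

lemma r1_NE: "D_NE (refl1 C) x y = D_NW C (1-x) y"
proof -
  have "{vol (refl1 C) x s2 y t2 | s2 t2. x \<le> s2 \<and> s2 \<le> 1 \<and> y \<le> t2 \<and> t2 \<le> 1}
      = {vol C s1 (1-x) y t2 | s1 t2. 0 \<le> s1 \<and> s1 \<le> 1-x \<and> y \<le> t2 \<and> t2 \<le> 1}"
    unfolding vol_r1
  proof (intro equalityI subsetI)
    fix v assume "v \<in> {vol C (1 - s2) (1 - x) y t2 |s2 t2. x \<le> s2 \<and> s2 \<le> 1 \<and> y \<le> t2 \<and> t2 \<le> 1}"
    then obtain s2 t2 where "v = vol C (1 - s2) (1 - x) y t2" "x \<le> s2 \<and> s2 \<le> 1 \<and> y \<le> t2 \<and> t2 \<le> 1" by blast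
    then show "v \<in> {vol C s1 (1-x) y t2 | s1 t2. 0 \<le> s1 \<and> s1 \<le> 1-x \<and> y \<le> t2 \<and> t2 \<le> 1}"
      by (intro CollectI exI[of _ "1-s2"] exI[of _ t2]) auto
  next
    fix v assume "v \<in> {vol C s1 (1-x) y t2 | s1 t2. 0 \<le> s1 \<and> s1 \<le> 1-x \<and> y \<le> t2 \<and> t2 \<le> 1}"
    then obtain s1 t2 where "v = vol C s1 (1 - x) y t2" "0 \<le> s1 \<and> s1 \<le> 1-x \<and> y \<le> t2 \<and> t2 \<le> 1" by blast
    then show "v \<in> {vol C (1 - s2) (1 - x) y t2 |s2 t2. x \<le> s2 \<and> s2 \<le> 1 \<and> y \<le> t2 \<and> t2 \<le> 1}"
      by (intro CollectI exI[of _ "1-s1"] exI[of _ t2]) auto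
  qed
  then show ?thesis by (simp add: D_NE_def D_NW_def)
qed

lemma r1_SW: "D_SW (refl1 C) x y = D_SE C (1-x) y"
proof -
  have "{vol (refl1 C) s1 x t1 y | s1 t1. 0 \<le> s1 \<and> s1 \<le> x \<and> 0 \<le> t1 \<and> t1 \<le> y}
      = {vol C (1-x) s2 t1 y | s2 t1. 1-x \<le> s2 \<and> s2 \<le> 1 \<and> 0 \<le> t1 \<and> t1 \<le> y}"
    unfolding vol_r1
  proof (intro equalityI subsetI)
    fix v assume "v \<in> {vol C (1-x) (1-s1) t1 y | s1 t1. 0 \<le> s1 \<and> s1 \<le> x \<and> 0 \<le> t1 \<and> t1 \<le> y}"
    then obtain s1 t1 where "v = vol C (1-x) (1-s1) t1 y" "0 \<le> s1 \<and> s1 \<le> x \<and> 0 \<le> t1 \<and> t1 \<le> y" by blast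
    then show "v \<in> {vol C (1-x) s2 t1 y | s2 t1. 1-x \<le> s2 \<and> s2 \<le> 1 \<and> 0 \<le> t1 \<and> t1 \<le> y}"
      by (intro CollectI exI[of _ "1-s1"] exI[of _ t1]) auto
  next
    fix v assume "v \<in> {vol C (1-x) s2 t1 y | s2 t1. 1-x \<le> s2 \<and> s2 \<le> 1 \<and> 0 \<le> t1 \<and> t1 \<le> y}"
    then obtain s2 t1 where "v = vol C (1-x) s2 t1 y" "1-x \<le> s2 \<and> s2 \<le> 1 \<and> 0 \<le> t1 \<and> t1 \<le> y" by blast
    then show "v \<in> {vol C (1-x) (1-s1) t1 y | s1 t1. 0 \<le> s1 \<and> s1 \<le> x \<and> 0 \<le> t1 \<and> t1 \<le> y}"
      by (intro CollectI exI[of _ "1-s2"] exI[of _ t1]) auto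
  qed
  then show ?thesis by (simp add: D_SW_def D_SE_def)
qed

lemma r1_NW: "D_NW (refl1 C) x y = D_NE C (1-x) y"
  using r1_NE[of "refl1 C" "1-x" y] by (simp add: refl1_def)

lemma r1_SE: "D_SE (refl1 C) x y = D_SW C (1-x) y"
  using r1_SW[of "refl1 C" "1-x" y] by (simp add: refl1_def)

lemma r2_NE: "D_NE (refl2 C) x y = D_SE C x (1-y)"
proof -
  have "{vol (refl2 C) x s2 y t2 | s2 t2. x \<le> s2 \<and> s2 \<le> 1 \<and> y \<le> t2 \<and> t2 \<le> 1}
      = {vol C x s2 t1 (1-y) | s2 t1. x \<le> s2 \<and> s2 \<le> 1 \<and> 0 \<le> t1 \<and> t1 \<le> 1-y}"
    unfolding vol_r2
  proof (intro equalityI subsetI)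
    fix v assume "v \<in> {vol C x s2 (1-t2) (1-y) | s2 t2. x \<le> s2 \<and> s2 \<le> 1 \<and> y \<le> t2 \<and> t2 \<le> 1}"
    then obtain s2 t2 where "v = vol C x s2 (1-t2) (1-y)" "x \<le> s2 \<and> s2 \<le> 1 \<and> y \<le> t2 \<and> t2 \<le> 1" by blast
    then show "v \<in> {vol C x s2 t1 (1-y) | s2 t1. x \<le> s2 \<and> s2 \<le> 1 \<and> 0 \<le> t1 \<and> t1 \<le> 1-y}"
      by (intro CollectI exI[of _ s2] exI[of _ "1-t2"]) auto
  next
    fix v assume "v \<in> {vol C x s2 t1 (1-y) | s2 t1. x \<le> s2 \<and> s2 \<le> 1 \<and> 0 \<le> t1 \<and> t1 \<le> 1-y}"
    then obtain s2 t1 where "v = vol C x s2 t1 (1-y)" "x \<le> s2 \<and> s2 \<le> 1 \<and> 0 \<le> t1 \<and> t1 \<le> 1-y" by blast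
    then show "v \<in> {vol C x s2 (1-t2) (1-y) | s2 t2. x \<le> s2 \<and> s2 \<le> 1 \<and> y \<le> t2 \<and> t2 \<le> 1}"
      by (intro CollectI exI[of _ s2] exI[of _ "1-t1"]) auto
  qed
  then show ?thesis by (simp add: D_NE_def D_SE_def)
qed

lemma r2_SW: "D_SW (refl2 C) x y = D_NW C x (1-y)"
proof -
  have "{vol (refl2 C) s1 x t1 y | s1 t1. 0 \<le> s1 \<and> s1 \<le> x \<and> 0 \<le> t1 \<and> t1 \<le> y}
      = {vol C s1 x (1-y) t2 | s1 t2. 0 \<le> s1 \<and> s1 \<le> x \<and> 1-y \<le> t2 \<and> t2 \<le> 1}"
    unfolding vol_r2
  proof (intro equalityI subsetI)
    fix v assume "v \<in> {vol C s1 x (1-y) (1-t1) | s1 t1. 0 \<le> s1 \<and> s1 \<le> x \<and> 0 \<le> t1 \<and> t1 \<le> y}"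
    then obtain s1 t1 where "v = vol C s1 x (1-y) (1-t1)" "0 \<le> s1 \<and> s1 \<le> x \<and> 0 \<le> t1 \<and> t1 \<le> y" by blast
    then show "v \<in> {vol C s1 x (1-y) t2 | s1 t2. 0 \<le> s1 \<and> s1 \<le> x \<and> 1-y \<le> t2 \<and> t2 \<le> 1}"
      by (intro CollectI exI[of _ s1] exI[of _ "1-t1"]) auto
  next
    fix v assume "v \<in> {vol C s1 x (1-y) t2 | s1 t2. 0 \<le> s1 \<and> s1 \<le> x \<and> 1-y \<le> t2 \<and> t2 \<le> 1}"
    then obtain s1 t2 where "v = vol C s1 x (1-y) t2" "0 \<le> s1 \<and> s1 \<le> x \<and> 1-y \<le> t2 \<and> t2 \<le> 1" by blast
    then show "v \<in> {vol C s1 x (1-y) (1-t1) | s1 t1. 0 \<le> s1 \<and> s1 \<le> x \<and> 0 \<le> t1 \<and> t1 \<le> y}"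
      by (intro CollectI exI[of _ s1] exI[of _ "1-t2"]) auto
  qed
  then show ?thesis by (simp add: D_SW_def D_NW_def)
qed

lemma r2_NW: "D_NW (refl2 C) x y = D_SW C x (1-y)"
  using r2_SW[of "refl2 C" x "1-y"] by (simp add: refl2_def min.commute)

lemma r2_SE: "D_SE (refl2 C) x y = D_NE C x (1-y)"
  using r2_NE[of "refl2 C" x "1-y"] by (simp add: refl2_def min.commute)

theorem mainTheorem6:
  fixes C :: "real \<Rightarrow> real \<Rightarrow> real"
    and \<sigma> :: "(real \<Rightarrow> real \<Rightarrow> real) \<Rightarrow> (real \<Rightarrow> real \<Rightarrow> real)"
  assumes "quasi_copula C"
    and "\<sigma> = refl1 \<or> \<sigma> = refl2"
  shows "\<forall>x\<in>{0..1}. \<forall>y\<in>{0..1}.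
           Q_M (\<sigma> C) x y = \<sigma> (Q_O C) x y \<and> Q_O (\<sigma> C) x y = \<sigma> (Q_M C) x y"
  using assms(2)
proof
  assume s: "\<sigma> = refl1" show ?thesis
    unfolding s Q_M_def Q_O_def D_M_def D_O_def r1_NE r1_SW r1_NW r1_SE by (simp add: refl1_def)
next
  assume s: "\<sigma> = refl2" show ?thesis
    unfolding s Q_M_def Q_O_def D_M_def D_O_def r2_NE r2_SW r2_NW r2_SE by (simp add: refl2_def min.commute)
qed

end
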